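(* Let $I$ be a set, $\mathcal{E}=(E_i)_{i\in I}$ a family of nonempty sets, $T$ a multiple relation in $\mathcal{E}$ and $(K,L)$ a bipartition of $J_T$. Then $T$ is scindable along $(K,L)$ if and only if for all $x\in G_{T_{|K}}$ and all $y\in G_{T_{|L}}$ one has $x+y\in G_T$.
   Context: For $J\subseteq I$, $Z_J=\prod_{j\in J}E_j$ ($Z_\emptyset=\{\bullet\}$). For $x\in Z_K$, $y\in Z_L$ with $K\cap L=\emptyset$, $x+y\in Z_{K\cup L}$ is the family agreeing with $x$ on $K$ and with $y$ on $L$. A multiple relation is $R=(J_R,G_R)$ with $G_R\subseteq Z_{J_R}$; $R_{|K}=(K,\{x_{|K}:x\in G_R\})$; $R\bowtie S=(J_R\cup J_S,\{x\in Z_{J_R\cup J_S}: x_{|J_R}\in G_R,\ x_{|J_S}\in G_S\})$. A bipartition of $J$ is a pair of nonempty disjoint subsets with union $J$. $T$ is scindable along $(K,L)$ if $T=R\bowtie S$ for some relations $R,S$ with $J_R=K$, $J_S=L$. *)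

theory Defs
  imports "HOL-Library.FuncSet"
begin

text \<open>Families over an index set are modelled as extensional functions:
  Z_J = PiE J E (functions equal to undefined outside J).
  A multiple relation is a pair (J_R, G_R).\<close>

type_synonym ('i, 'v) mrel = "'i set \<times> ('i \<Rightarrow> 'v) set"

definition Z :: "('i \<Rightarrow> 'v set) \<Rightarrow> 'i set \<Rightarrow> ('i \<Rightarrow> 'v) set" where
  "Z E J = PiE J E"

definition multirel :: "'i set \<Rightarrow> ('i \<Rightarrow> 'v set) \<Rightarrow> ('i, 'v) mrel \<Rightarrow> bool" where
  "multirel I E R \<longleftrightarrow> fst R \<subseteq> I \<and> snd R \<subseteq> Z E (fst R)"

text \<open>x + y for x on K, y on L (K, L disjoint): agrees with x on K, with y elsewhere.\<close>
definition fam_add :: "'i set \<Rightarrow> ('i \<Rightarrow> 'v) \<Rightarrow> ('i \<Rightarrow> 'v) \<Rightarrow> ('i \<Rightarrow> 'v)" where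
  "fam_add K x y = (\<lambda>i. if i \<in> K then x i else y i)"

definition restr :: "('i, 'v) mrel \<Rightarrow> 'i set \<Rightarrow> ('i, 'v) mrel" where
  "restr R K = (K, (\<lambda>x. restrict x K) ` snd R)"

definition join :: "('i \<Rightarrow> 'v set) \<Rightarrow> ('i, 'v) mrel \<Rightarrow> ('i, 'v) mrel \<Rightarrow> ('i, 'v) mrel" where
  "join E R S = (fst R \<union> fst S,
     {x \<in> Z E (fst R \<union> fst S). restrict x (fst R) \<in> snd R \<and> restrict x (fst S) \<in> snd S})"

definition bipartition :: "'i set \<Rightarrow> 'i set \<Rightarrow> 'i set \<Rightarrow> bool" where
  "bipartition J K L \<longleftrightarrow> K \<noteq> {} \<and> L \<noteq> {} \<and> K \<inter> L = {} \<and> K \<union> L = J"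

definition scindable :: "'i set \<Rightarrow> ('i \<Rightarrow> 'v set) \<Rightarrow> ('i, 'v) mrel \<Rightarrow> 'i set \<Rightarrow> 'i set \<Rightarrow> bool" where
  "scindable I E T K L \<longleftrightarrow>
     (\<exists>R S. multirel I E R \<and> multirel I E S \<and> fst R = K \<and> fst S = L \<and> T = join E R S)"

end

theory Submission
  imports Defs
begin

lemma famadd_restr:
  assumes "x \<in> PiE (K \<union> L) E"
  shows "fam_add K (restrict x K) (restrict x L) = x"
  using assms by (auto simp: fam_add_def fun_eq_iff PiE_def extensional_def)

theorem mainTheorem7:
  fixes I :: "'i set" and E :: "'i \<Rightarrow> 'v set" and T :: "('i, 'v) mrel"
    and K L :: "'i set"
  assumes "\<forall>i\<in>I. E i \<noteq> {}"
    and "multirel I E T"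
    and "bipartition (fst T) K L"
  shows "scindable I E T K L \<longleftrightarrow>
    (\<forall>x\<in>snd (restr T K). \<forall>y\<in>snd (restr T L). fam_add K x y \<in> snd T)"
proof -
  obtain J G where T: "T = (J, G)" by (cases T)
  have JI: "J \<subseteq> I" and GZ: "G \<subseteq> PiE J E" using assms(2) by (auto simp: multirel_def Z_def T)
  have KL: "K \<inter> L = {}" "K \<union> L = J" using assms(3) by (auto simp: bipartition_def T)
  show ?thesis
  proof
    assume "scindable I E T K L"
    then obtain R S where R: "multirel I E R" "multirel I E S" "fst R = K" "fst S = L"
      "T = join E R S" unfolding scindable_def by blast
    have G: "G = {x \<in> PiE J E. restrict x K \<in> snd R \<and> restrict x L \<in> snd S}"
      using R KL by (simp add: join_def T Z_def)
    show "\<forall>x\<in>snd (restr T K). \<forall>y\<in>snd (restr T L). fam_add K x y \<in> snd T"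
    proof (intro ballI)
      fix x y assume "x \<in> snd (restr T K)" "y \<in> snd (restr T L)"
      then obtain t t' where t: "t \<in> G" "x = restrict t K" and t': "t' \<in> G" "y = restrict t' L"
        by (auto simp: restr_def T)
      have r1: "restrict (fam_add K x y) K = restrict t K"
        using t by (auto simp: fam_add_def fun_eq_iff)
      have r2: "restrict (fam_add K x y) L = restrict t' L"
        using t' KL by (auto simp: fam_add_def fun_eq_iff)
      have "fam_add K x y \<in> PiE J E"
        using t t' KL GZ by (auto simp: fam_add_def PiE_def Pi_def extensional_def)
      then show "fam_add K x y \<in> snd T"
        using r1 r2 t t' unfolding T snd_conv G by auto
    qed
  next
    assume H: "\<forall>x\<in>snd (restr T K). \<forall>y\<in>snd (restr T L). fam_add K x y \<in> snd T"
    have m1: "multirel I E (restr T K)" "multirel I E (restr T L)"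
    proof -
      have "\<And>M. M \<subseteq> J \<Longrightarrow> (\<lambda>x. restrict x M) ` G \<subseteq> PiE M E"
        using GZ by (force simp: PiE_iff)
      then show "multirel I E (restr T K)" "multirel I E (restr T L)"
        using KL JI unfolding multirel_def restr_def T Z_def fst_conv snd_conv by auto
    qed
    have "T = join E (restr T K) (restr T L)"
    proof -
      have "G = {x \<in> PiE J E. restrict x K \<in> (\<lambda>x. restrict x K) ` G \<and> restrict x L \<in> (\<lambda>x. restrict x L) ` G}"
      proof (intro equalityI subsetI)
        fix x assume "x \<in> G" then show "x \<in> {x \<in> PiE J E. restrict x K \<in> (\<lambda>x. restrict x K) ` G \<and> restrict x L \<in> (\<lambda>x. restrict x L) ` G}"
          using GZ by auto
      next
        fix x assume x: "x \<in> {x \<in> PiE J E. restrict x K \<in> (\<lambda>x. restrict x K) ` G \<and> restrict x L \<in> (\<lambda>x. restrict x L) ` G}"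
        then have a: "restrict x K \<in> snd (restr T K)" and b: "restrict x L \<in> snd (restr T L)"
          unfolding restr_def T snd_conv by blast+
        have "fam_add K (restrict x K) (restrict x L) \<in> G"
        proof -
          have "fam_add K (restrict x K) (restrict x L) \<in> snd T" using H a b by blast
          then show ?thesis unfolding T by simp
        qed
        moreover have "fam_add K (restrict x K) (restrict x L) = x"
          using x KL famadd_restr[of x K L E] by auto
        ultimately show "x \<in> G" by simp
      qed
      then show ?thesis using KL by (simp add: join_def restr_def T Z_def)
    qed
    then show "scindable I E T K L" unfolding scindable_def using m1
      by (auto simp: restr_def)
  qed
qed

end
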